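(* Let $A,B$ be nonempty persistence diagrams, $\Theta(c)=d_\infty(cA,B)$ for $c\ge0$, let $b^{(m)}\in\chi(B)$ and $a^{(m)}\in\chi(A)$ be points with largest $y$-coordinate within $\chi(B)$ and $\chi(A)$ respectively, and set $$c_B=\min\Big\{\frac{b^{(m)}_y+b^{(m)}_x}{2\,\mathrm{bd}(A)},\frac{\mathrm{pers}(B)}{\mathrm{pers}(A)}\Big\},\qquad c_A=\max\Big\{\frac{2\,\mathrm{bd}(B)}{a^{(m)}_x+a^{(m)}_y},\frac{\mathrm{pers}(B)}{\mathrm{pers}(A)}\Big\}.$$ Then $c_B\le c_A$; $\Theta(c)=\mathrm{pers}(B)$ for all $0\le c\le c_B$; $\Theta(c)=c\cdot\mathrm{pers}(A)$ for all $c\ge c_A$; and the minimum value $\overline{d_D}(A,B)$ of $\Theta$ on $[0,\infty)$ is attained at some $c\in[c_B,c_A]$.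
   Context: A persistence diagram is a finite multiset of points $a=(a_x,a_y)$ with $0\le a_x<a_y<\infty$ together with the diagonal $\Delta$ of infinite multiplicity; nonempty means it has at least one such point. $d_\infty$ is the bottleneck distance. $cA=\{(ca_x,ca_y)\}$ for $c>0$, $0A$ is the empty diagram. $\overline{d_D}(A,B)=\inf_{c\ge0}d_\infty(cA,B)$. $\mathrm{pers}(a)=(a_y-a_x)/2$; $\mathrm{pers}(A)=\max_{a\in A}\mathrm{pers}(a)$; $\chi(A)$ is the multiset of points of $A$ with persistence equal to $\mathrm{pers}(A)$; $\mathrm{bd}(A)=\max_{a\in A}a_y$. *)

theory Defs
  imports "HOL-Analysis.Analysis" "HOL-Library.Multiset"
begin

type_synonym point = "real \<times> real"
type_synonym diagram = "point multiset"

text \<open>A persistence diagram: finite multiset of off-diagonal points (x,y) with 0 <= x < y;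
  the diagonal (infinite multiplicity) is implicit in the bottleneck distance.\<close>
definition is_diagram :: "diagram \<Rightarrow> bool" where
  "is_diagram A \<longleftrightarrow> (\<forall>a\<in>#A. 0 \<le> fst a \<and> fst a < snd a)"

definition pers_pt :: "point \<Rightarrow> real" where
  "pers_pt a = (snd a - fst a) / 2"

definition dinf_pt :: "point \<Rightarrow> point \<Rightarrow> real" where
  "dinf_pt a b = max \<bar>fst a - fst b\<bar> \<bar>snd a - snd b\<bar>"

definition Max0 :: "real set \<Rightarrow> real" where
  "Max0 S = (if S = {} then 0 else Max S)"

text \<open>Unmatched points are matched to the diagonal,
  at cost equal to their persistence (L-infinity distance to the diagonal).\<close>
definition is_matching :: "diagram \<Rightarrow> diagram \<Rightarrow> (point \<times> point) multiset \<Rightarrow> bool" where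
  "is_matching A B M \<longleftrightarrow> image_mset fst M \<subseteq># A \<and> image_mset snd M \<subseteq># B"

definition matching_cost :: "diagram \<Rightarrow> diagram \<Rightarrow> (point \<times> point) multiset \<Rightarrow> real" where
  "matching_cost A B M = max (Max0 ((\<lambda>(a,b). dinf_pt a b) ` set_mset M))
      (max (Max0 (pers_pt ` set_mset (A - image_mset fst M)))
           (Max0 (pers_pt ` set_mset (B - image_mset snd M))))"

definition bottleneck :: "diagram \<Rightarrow> diagram \<Rightarrow> real" where
  "bottleneck A B = Inf {matching_cost A B M | M. is_matching A B M}"

definition scale_diag :: "real \<Rightarrow> diagram \<Rightarrow> diagram" where
  "scale_diag c A = (if c = 0 then {#} else image_mset (\<lambda>(x,y). (c * x, c * y)) A)"

definition dbar :: "diagram \<Rightarrow> diagram \<Rightarrow> real" where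
  "dbar A B = Inf {bottleneck (scale_diag c A) B | c. c \<ge> 0}"

definition persD :: "diagram \<Rightarrow> real" where
  "persD A = Max (pers_pt ` set_mset A)"

definition chi :: "diagram \<Rightarrow> diagram" where
  "chi A = filter_mset (\<lambda>a. pers_pt a = persD A) A"

definition bd :: "diagram \<Rightarrow> real" where
  "bd A = Max (snd ` set_mset A)"

end

theory Submission
  imports Defs
begin

lemma Max0_nonneg: "finite S \<Longrightarrow> (\<forall>x\<in>S. 0 \<le> x) \<Longrightarrow> 0 \<le> Max0 S"
  unfolding Max0_def by (auto intro: Max_ge_iff[THEN iffD2])

lemma Max0_ge: "finite S \<Longrightarrow> x \<in> S \<Longrightarrow> x \<le> Max0 S"
  unfolding Max0_def by auto

lemma Max0_shift:
  assumes "finite S" "0 \<le> d" "\<forall>x\<in>S. f' x \<le> f x + d"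
  shows "Max0 (f' ` S) \<le> Max0 (f ` S) + d"
proof (cases "S = {}")
  case True then show ?thesis using assms by (simp add: Max0_def)
next
  case False
  have "Max (f' ` S) \<in> f' ` S" using Max_in[of "f' ` S"] assms(1) False by auto
  then obtain x where x: "x \<in> S" "Max (f' ` S) = f' x" by auto
  have "f x \<le> Max (f ` S)" using x assms(1) by auto
  moreover have "f' x \<le> f x + d" using assms(3) x by auto
  ultimately show ?thesis using x False by (simp add: Max0_def)
qed

lemma dinf_nonneg: "0 \<le> dinf_pt a b"
  unfolding dinf_pt_def by simp

lemma cost_nonneg: "0 \<le> matching_cost X B M"
proof -
  have "0 \<le> Max0 ((\<lambda>(a,b). dinf_pt a b) ` set_mset M)"
    by (rule Max0_nonneg) (auto simp: dinf_nonneg)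
  then show ?thesis unfolding matching_cost_def by simp
qed

lemma empty_matching: "is_matching X B {#}"
  unfolding is_matching_def by simp

lemma bottleneck_le: "is_matching X B M \<Longrightarrow> bottleneck X B \<le> matching_cost X B M"
  unfolding bottleneck_def
  by (rule cInf_lower) (auto intro: bdd_belowI[where m=0] simp: cost_nonneg)

lemma bottleneck_ge: "(\<And>M. is_matching X B M \<Longrightarrow> v \<le> matching_cost X B M) \<Longrightarrow> v \<le> bottleneck X B"
  unfolding bottleneck_def
  by (rule cInf_greatest) (auto intro: empty_matching)

lemma bottleneck_shift:
  assumes X': "X' = image_mset g X" and d: "0 \<le> d"
    and hp: "\<forall>p\<in>#X. pers_pt (g p) \<le> pers_pt p + d"
    and hd: "\<forall>p\<in>#X. \<forall>b. dinf_pt (g p) b \<le> dinf_pt p b + d"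
  shows "bottleneck X' B \<le> bottleneck X B + d"
proof -
  have "bottleneck X' B - d \<le> bottleneck X B"
  proof (rule bottleneck_ge)
    fix M assume M: "is_matching X B M"
    define M' where "M' = image_mset (map_prod g id) M"
    have f1: "image_mset fst M' = image_mset g (image_mset fst M)"
      unfolding M'_def by (simp add: image_mset.compositionality comp_def)
    have f2: "image_mset snd M' = image_mset snd M"
      unfolding M'_def by (simp add: image_mset.compositionality comp_def)
    have sub: "image_mset fst M \<subseteq># X" using M unfolding is_matching_def by simp
    have M': "is_matching X' B M'"
      using M unfolding is_matching_def f1 f2 X' by (simp add: image_mset_subseteq_mono)
    have diff: "X' - image_mset fst M' = image_mset g (X - image_mset fst M)"
      unfolding X' f1 using image_mset_Diff[OF sub, of g] by simp
    have inM: "\<And>p b. (p,b) \<in># M \<Longrightarrow> p \<in># X"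
      using mset_subset_eqD[OF sub] by force
    have t1: "Max0 ((\<lambda>(a,b). dinf_pt a b) ` set_mset M') \<le> Max0 ((\<lambda>(a,b). dinf_pt a b) ` set_mset M) + d"
    proof -
      have "(\<lambda>(a,b). dinf_pt a b) ` set_mset M' = (\<lambda>(a,b). dinf_pt (g a) b) ` set_mset M"
        unfolding M'_def by (force simp: image_image split: prod.splits)
      moreover have "Max0 ((\<lambda>(a,b). dinf_pt (g a) b) ` set_mset M) \<le> Max0 ((\<lambda>(a,b). dinf_pt a b) ` set_mset M) + d"
        by (rule Max0_shift) (use d hd inM in auto)
      ultimately show ?thesis by simp
    qed
    have t2: "Max0 (pers_pt ` set_mset (X' - image_mset fst M')) \<le> Max0 (pers_pt ` set_mset (X - image_mset fst M)) + d"
    proof -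
      have "pers_pt ` set_mset (X' - image_mset fst M') = (\<lambda>p. pers_pt (g p)) ` set_mset (X - image_mset fst M)"
        unfolding diff by (auto simp: image_image)
      moreover have "Max0 ((\<lambda>p. pers_pt (g p)) ` set_mset (X - image_mset fst M)) \<le> Max0 (pers_pt ` set_mset (X - image_mset fst M)) + d"
        by (rule Max0_shift) (use d hp in \<open>auto dest: in_diffD\<close>)
      ultimately show ?thesis by simp
    qed
    have "bottleneck X' B \<le> matching_cost X' B M'" by (rule bottleneck_le[OF M'])
    also have "\<dots> \<le> matching_cost X B M + d"
      using t1 t2 d unfolding matching_cost_def f2 by linarith
    finally show "bottleneck X' B - d \<le> matching_cost X B M" by simp
  qed
  then show ?thesis by simp
qed

lemma Max0_le: "finite S \<Longrightarrow> 0 \<le> v \<Longrightarrow> (\<forall>x\<in>S. x \<le> v) \<Longrightarrow> Max0 S \<le> v"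
  unfolding Max0_def by auto

lemma scale_mem: "p \<in># scale_diag c A \<Longrightarrow> \<exists>a\<in>#A. p = (c * fst a, c * snd a)"
  unfolding scale_diag_def by (force split: if_splits)

lemma scale_mem_in: "c \<noteq> 0 \<Longrightarrow> a \<in># A \<Longrightarrow> (c * fst a, c * snd a) \<in># scale_diag c A"
  unfolding scale_diag_def by (cases a) force

lemma bd_ge: "a \<in># A \<Longrightarrow> snd a \<le> bd A"
  unfolding bd_def by auto

lemma persD_ge: "a \<in># A \<Longrightarrow> pers_pt a \<le> persD A"
  unfolding persD_def by auto

lemma persD_pos: "is_diagram A \<Longrightarrow> A \<noteq> {#} \<Longrightarrow> 0 < persD A"
proof -
  assume d: "is_diagram A" and ne: "A \<noteq> {#}"
  then obtain a where a: "a \<in># A" by blast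
  then have "0 < pers_pt a" using d unfolding is_diagram_def pers_pt_def by auto
  then show ?thesis using persD_ge[OF a] by simp
qed

lemma persD_Max0: "A \<noteq> {#} \<Longrightarrow> persD A = Max0 (pers_pt ` set_mset A)"
  unfolding persD_def Max0_def by auto

lemma chi_sub: "a \<in># chi A \<Longrightarrow> a \<in># A \<and> pers_pt a = persD A"
  unfolding chi_def by auto

lemma upper:
  assumes "is_diagram A" "B \<noteq> {#}" "0 \<le> c" "A \<noteq> {#}" "is_diagram B"
  shows "bottleneck (scale_diag c A) B \<le> max (c * persD A) (persD B)"
proof -
  have pA: "0 < persD A" if "A \<noteq> {#}" using persD_pos assms that by auto
  have "Max0 (pers_pt ` set_mset (scale_diag c A)) \<le> c * persD A"
  proof (rule Max0_le)
    show "0 \<le> c * persD A"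
      using pA assms by simp
    show "\<forall>x\<in>pers_pt ` set_mset (scale_diag c A). x \<le> c * persD A"
    proof
      fix x assume "x \<in> pers_pt ` set_mset (scale_diag c A)"
      then obtain p where p: "p \<in># scale_diag c A" "x = pers_pt p" by auto
      then obtain a where a: "a \<in># A" "p = (c * fst a, c * snd a)" using scale_mem by blast
      have "x = c * pers_pt a" using p a unfolding pers_pt_def by (simp add: algebra_simps)
      also have "\<dots> \<le> c * persD A" using persD_ge[OF a(1)] assms(3) by (simp add: mult_left_mono)
      finally show "x \<le> c * persD A" .
    qed
  qed simp
  moreover have "0 \<le> persD B" using persD_pos[OF assms(5,2)] by simp
  ultimately show ?thesis
    using bottleneck_le[OF empty_matching, of "scale_diag c A" B] persD_Max0[OF assms(2)]
    unfolding matching_cost_def by (simp add: Max0_def)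
qed


lemma not_diff_in: "x \<in># X \<Longrightarrow> x \<notin># X - Y \<Longrightarrow> x \<in># Y"
proof -
  assume a: "x \<in># X" "x \<notin># X - Y"
  then have "count X x \<le> count Y x" by (simp add: in_diff_count not_less)
  moreover have "0 < count X x" using a(1) by simp
  ultimately have "0 < count Y x" by linarith
  then show ?thesis by simp
qed

lemma cost_ge1: "v \<le> Max0 ((\<lambda>(a,b). dinf_pt a b) ` set_mset M) \<Longrightarrow> v \<le> matching_cost X B M"
  unfolding matching_cost_def by (simp add: le_max_iff_disj)

lemma cost_ge2: "v \<le> Max0 (pers_pt ` set_mset (X - image_mset fst M)) \<Longrightarrow> v \<le> matching_cost X B M"
  unfolding matching_cost_def by (simp add: le_max_iff_disj)

lemma cost_ge3: "v \<le> Max0 (pers_pt ` set_mset (B - image_mset snd M)) \<Longrightarrow> v \<le> matching_cost X B M"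
  unfolding matching_cost_def by (simp add: le_max_iff_disj)

lemma lower_B:
  assumes "is_diagram A" "bm \<in># B" "pers_pt bm = persD B" "0 \<le> c"
    "c * bd A \<le> (snd bm + fst bm) / 2"
  shows "persD B \<le> bottleneck (scale_diag c A) B"
proof (rule bottleneck_ge)
  fix M assume M: "is_matching (scale_diag c A) B M"
  show "persD B \<le> matching_cost (scale_diag c A) B M"
  proof (cases "bm \<in># B - image_mset snd M")
    case True
    then have "pers_pt bm \<le> Max0 (pers_pt ` set_mset (B - image_mset snd M))"
      by (intro Max0_ge finite_imageI finite_set_mset imageI)
    then have "persD B \<le> Max0 (pers_pt ` set_mset (B - image_mset snd M))"
      using assms(3) by simp
    then show ?thesis by (rule cost_ge3)
  next
    case False
    have "bm \<in># image_mset snd M" by (rule not_diff_in[OF assms(2) False])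
    then obtain x where x: "x \<in># M" "bm = snd x" by auto
    define p where "p = fst x"
    have pM: "(p, bm) \<in># M" using x p_def by simp
    have "p \<in># image_mset fst M" using x(1) p_def by simp
    then have "p \<in># scale_diag c A" using M unfolding is_matching_def by (meson mset_subset_eqD)
    then obtain a where a: "a \<in># A" "p = (c * fst a, c * snd a)" using scale_mem by blast
    have "c * snd a \<le> c * bd A" using bd_ge[OF a(1)] assms(4) by (simp add: mult_left_mono)
    then have "persD B \<le> snd bm - snd p"
      using assms(3,5) a(2) unfolding pers_pt_def by simp
    also have "\<dots> \<le> dinf_pt p bm" unfolding dinf_pt_def by linarith
    also have "\<dots> \<le> Max0 ((\<lambda>(a,b). dinf_pt a b) ` set_mset M)"
    proof (rule Max0_ge)
      show "dinf_pt p bm \<in> (\<lambda>(a,b). dinf_pt a b) ` set_mset M"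
        using pM by (metis (no_types, lifting) case_prod_conv image_eqI)
    qed simp
    finally show ?thesis by (rule cost_ge1)
  qed
qed

lemma lower_A:
  assumes "is_diagram A" "am \<in># A" "pers_pt am = persD A" "0 < c"
    "bd B \<le> c * (fst am + snd am) / 2"
  shows "c * persD A \<le> bottleneck (scale_diag c A) B"
proof (rule bottleneck_ge)
  fix M assume M: "is_matching (scale_diag c A) B M"
  define p where "p = (c * fst am, c * snd am)"
  have p: "p \<in># scale_diag c A" using scale_mem_in[OF _ assms(2), of c] assms(4) p_def by simp
  have pp: "pers_pt p = c * persD A" using assms(3) unfolding p_def pers_pt_def by (simp add: algebra_simps)
  show "c * persD A \<le> matching_cost (scale_diag c A) B M"
  proof (cases "p \<in># scale_diag c A - image_mset fst M")
    case True
    then have "pers_pt p \<le> Max0 (pers_pt ` set_mset (scale_diag c A - image_mset fst M))"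
      by (intro Max0_ge finite_imageI finite_set_mset imageI)
    then have "c * persD A \<le> Max0 (pers_pt ` set_mset (scale_diag c A - image_mset fst M))"
      using pp by simp
    then show ?thesis by (rule cost_ge2)
  next
    case False
    have "p \<in># image_mset fst M" by (rule not_diff_in[OF p False])
    then obtain x where x: "x \<in># M" "p = fst x" by auto
    define b where "b = snd x"
    have pM: "(p, b) \<in># M" using x b_def by simp
    have "b \<in># image_mset snd M" using x(1) b_def by simp
    then have b: "b \<in># B" using M unfolding is_matching_def by (meson mset_subset_eqD)
    have "c * persD A \<le> snd p - snd b"
      using bd_ge[OF b] assms(3,5) unfolding pers_pt_def p_def by (simp add: algebra_simps)
    also have "\<dots> \<le> dinf_pt p b" unfolding dinf_pt_def by linarith
    also have "\<dots> \<le> Max0 ((\<lambda>(a,b). dinf_pt a b) ` set_mset M)"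
    proof (rule Max0_ge)
      show "dinf_pt p b \<in> (\<lambda>(a,b). dinf_pt a b) ` set_mset M"
        using pM by (metis (no_types, lifting) case_prod_conv image_eqI)
    qed simp
    finally show ?thesis by (rule cost_ge1)
  qed
qed

lemma lin_aux: "(u::real) - v = (x - y) / 2 \<Longrightarrow> x \<le> D \<Longrightarrow> - y \<le> D \<Longrightarrow> u \<le> v + D"
  by (simp add: field_simps)

lemma add_aux: "(a::real) \<le> b + e \<Longrightarrow> e \<le> D \<Longrightarrow> a \<le> b + D"
  by simp

lemma max_aux: "(a1::real) \<le> b1 + e \<Longrightarrow> a2 \<le> b2 + e \<Longrightarrow> max a1 a2 \<le> max b1 b2 + e"
  by (simp add: max_def)

lemma lip:
  assumes "is_diagram A" "0 < c" "0 < c'" "A \<noteq> {#}"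
  shows "bottleneck (scale_diag c' A) B \<le> bottleneck (scale_diag c A) B + \<bar>c' - c\<bar> * bd A"
proof (rule bottleneck_shift)
  define g where "g = (\<lambda>(x::real,y::real). (c'/c * x, c'/c * y))"
  show "scale_diag c' A = image_mset g (scale_diag c A)"
    unfolding scale_diag_def g_def using assms
    by (auto simp: image_mset.compositionality comp_def intro!: image_mset_cong split: prod.splits)
  have bd0: "0 \<le> bd A" if ne: "A \<noteq> {#}"
  proof -
    obtain a where a: "a \<in># A" using ne by blast
    then show ?thesis using bd_ge[OF a] assms(1) unfolding is_diagram_def by fastforce
  qed
  show "0 \<le> \<bar>c' - c\<bar> * bd A"
    using bd0[OF assms(4)] by simp
  {
    fix p assume "p \<in># scale_diag c A"
    then obtain a where a: "a \<in># A" "p = (c * fst a, c * snd a)" using scale_mem by blast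
    have a0: "0 \<le> fst a" "fst a < snd a" "snd a \<le> bd A"
      using a(1) assms(1) bd_ge[OF a(1)] unfolding is_diagram_def by auto
    have gp: "g p = (c' * fst a, c' * snd a)" using a(2) assms(2) unfolding g_def by simp
    have e1: "\<bar>c' * fst a - c * fst a\<bar> \<le> \<bar>c' - c\<bar> * bd A"
    proof -
      have "\<bar>c' * fst a - c * fst a\<bar> = \<bar>c' - c\<bar> * fst a" using a0 by (simp add: abs_mult left_diff_distrib[symmetric])
      also have "\<dots> \<le> \<bar>c' - c\<bar> * bd A" using a0 by (intro mult_left_mono) auto
      finally show ?thesis .
    qed
    have e2: "\<bar>c' * snd a - c * snd a\<bar> \<le> \<bar>c' - c\<bar> * bd A"
    proof -
      have "\<bar>c' * snd a - c * snd a\<bar> = \<bar>c' - c\<bar> * snd a" using a0 by (simp add: abs_mult left_diff_distrib[symmetric])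
      also have "\<dots> \<le> \<bar>c' - c\<bar> * bd A" using a0 by (intro mult_left_mono) auto
      finally show ?thesis .
    qed
    have "pers_pt (g p) = (c' * snd a - c' * fst a) / 2" by (simp add: gp pers_pt_def)
    moreover have "pers_pt p = (c * snd a - c * fst a) / 2" by (simp add: a(2) pers_pt_def)
    ultimately have "pers_pt (g p) - pers_pt p = ((c' * snd a - c * snd a) - (c' * fst a - c * fst a)) / 2"
      by (simp add: field_simps)
    then have "pers_pt (g p) \<le> pers_pt p + \<bar>c' - c\<bar> * bd A"
      by (rule lin_aux[OF _ abs_le_D1[OF e2] abs_le_D2[OF e1]])
    moreover have "\<forall>b. dinf_pt (g p) b \<le> dinf_pt p b + \<bar>c' - c\<bar> * bd A"
    proof
      fix b :: point
      have d1: "\<bar>c' * fst a - fst b\<bar> \<le> \<bar>c * fst a - fst b\<bar> + \<bar>c' * fst a - c * fst a\<bar>"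
        by (rule order_trans[OF _ abs_triangle_ineq]) simp
      have d2: "\<bar>c' * snd a - snd b\<bar> \<le> \<bar>c * snd a - snd b\<bar> + \<bar>c' * snd a - c * snd a\<bar>"
        by (rule order_trans[OF _ abs_triangle_ineq]) simp
      have "dinf_pt (g p) b = max \<bar>c' * fst a - fst b\<bar> \<bar>c' * snd a - snd b\<bar>"
        by (simp add: gp dinf_pt_def)
      moreover have "dinf_pt p b = max \<bar>c * fst a - fst b\<bar> \<bar>c * snd a - snd b\<bar>"
        by (simp add: a(2) dinf_pt_def)
      moreover have "\<bar>c' * fst a - fst b\<bar> \<le> \<bar>c * fst a - fst b\<bar> + \<bar>c' - c\<bar> * bd A"
        using d1 e1 by (rule add_aux)
      moreover have "\<bar>c' * snd a - snd b\<bar> \<le> \<bar>c * snd a - snd b\<bar> + \<bar>c' - c\<bar> * bd A"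
        using d2 e2 by (rule add_aux)
      ultimately show "dinf_pt (g p) b \<le> dinf_pt p b + \<bar>c' - c\<bar> * bd A"
        by (simp only:) (rule max_aux)
    qed
    ultimately have "pers_pt (g p) \<le> pers_pt p + \<bar>c' - c\<bar> * bd A \<and> (\<forall>b. dinf_pt (g p) b \<le> dinf_pt p b + \<bar>c' - c\<bar> * bd A)" by blast
  }
  then show "\<forall>p\<in>#scale_diag c A. pers_pt (g p) \<le> pers_pt p + \<bar>c' - c\<bar> * bd A"
    "\<forall>p\<in>#scale_diag c A. \<forall>b. dinf_pt (g p) b \<le> dinf_pt p b + \<bar>c' - c\<bar> * bd A" by blast+
qed


theorem mainTheorem8:
  fixes A B :: diagram and am bm :: point and \<Theta> :: "real \<Rightarrow> real" and cA cB :: real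
  assumes "is_diagram A" and "is_diagram B" and "A \<noteq> {#}" and "B \<noteq> {#}"
    and "\<Theta> = (\<lambda>c. bottleneck (scale_diag c A) B)"
    and "bm \<in># chi B" and "\<forall>b\<in>#chi B. snd b \<le> snd bm"
    and "am \<in># chi A" and "\<forall>a\<in>#chi A. snd a \<le> snd am"
    and "cB = min ((snd bm + fst bm) / (2 * bd A)) (persD B / persD A)"
    and "cA = max (2 * bd B / (fst am + snd am)) (persD B / persD A)"
  shows "cB \<le> cA
    \<and> (\<forall>c. 0 \<le> c \<and> c \<le> cB \<longrightarrow> \<Theta> c = persD B)
    \<and> (\<forall>c. c \<ge> cA \<longrightarrow> \<Theta> c = c * persD A)
    \<and> (\<exists>c. cB \<le> c \<and> c \<le> cA \<and> \<Theta> c = dbar A B \<and> (\<forall>c'\<ge>0. \<Theta> c \<le> \<Theta> c'))"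
proof -
  note dA = assms(1) and dB = assms(2) and neA = assms(3) and neB = assms(4)
  have pA: "0 < persD A" by (rule persD_pos[OF dA neA])
  have pB: "0 < persD B" by (rule persD_pos[OF dB neB])
  have am: "am \<in># A" "pers_pt am = persD A" using chi_sub[OF assms(8)] by auto
  have bm: "bm \<in># B" "pers_pt bm = persD B" using chi_sub[OF assms(6)] by auto
  have am0: "0 \<le> fst am" "fst am < snd am" using am(1) dA unfolding is_diagram_def by auto
  have bm0: "0 \<le> fst bm" "fst bm < snd bm" using bm(1) dB unfolding is_diagram_def by auto
  have bdA: "0 < bd A" using bd_ge[OF am(1)] am0 by linarith
  have bdB: "0 < bd B" using bd_ge[OF bm(1)] bm0 by linarith
  have cB0: "0 < cB" using assms(10) pA pB bdA bm0 by simp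
  have cBA: "cB \<le> cA" using assms(10,11) by simp
  have part2: "\<Theta> c = persD B" if c: "0 \<le> c" "c \<le> cB" for c
  proof -
    have c1: "c \<le> (snd bm + fst bm) / (2 * bd A)" "c \<le> persD B / persD A" using c assms(10) by auto
    have "c * bd A \<le> (snd bm + fst bm) / 2" using c1(1) bdA by (simp add: pos_le_divide_eq mult.commute)
    then have lo: "persD B \<le> \<Theta> c" using lower_B[OF dA bm(1,2) c(1)] assms(5) by simp
    have "c * persD A \<le> persD B" using c1(2) pA by (simp add: pos_le_divide_eq)
    then have "\<Theta> c \<le> persD B" using upper[OF dA neB c(1) neA dB] assms(5) by simp
    then show ?thesis using lo by simp
  qed
  have part3: "\<Theta> c = c * persD A" if c: "cA \<le> c" for c
  proof -
    have c1: "2 * bd B / (fst am + snd am) \<le> c" "persD B / persD A \<le> c" using c assms(11) by auto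
    have s0: "0 < fst am + snd am" using am0 by linarith
    have c0: "0 < c" using c1(1) bdB s0 by (smt (verit) divide_pos_pos)
    have "bd B \<le> c * (fst am + snd am) / 2" using c1(1) s0 by (simp add: pos_divide_le_eq)
    then have lo: "c * persD A \<le> \<Theta> c" using lower_A[OF dA am(1,2) c0] assms(5) by simp
    have "persD B \<le> c * persD A" using c1(2) pA by (simp add: pos_divide_le_eq)
    then have "\<Theta> c \<le> c * persD A" using upper[OF dA neB _ neA dB, of c] c0 assms(5) by simp
    then show ?thesis using lo by simp
  qed
  have "(bd A)-lipschitz_on {cB..cA} \<Theta>"
  proof (rule lipschitz_onI)
    fix x y assume "x \<in> {cB..cA}" "y \<in> {cB..cA}"
    then have "0 < x" "0 < y" using cB0 by auto
    then have "\<Theta> x \<le> \<Theta> y + \<bar>x - y\<bar> * bd A" "\<Theta> y \<le> \<Theta> x + \<bar>y - x\<bar> * bd A"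
      unfolding assms(5) by (simp_all add: lip[OF dA _ _ neA])
    then show "dist (\<Theta> x) (\<Theta> y) \<le> bd A * dist x y"
      by (simp add: dist_real_def abs_le_iff abs_minus_commute mult.commute)
  qed (use bdA in simp)
  then have "continuous_on {cB..cA} \<Theta>" by (rule lipschitz_on_continuous_on)
  then obtain c0 where c0: "c0 \<in> {cB..cA}" "\<forall>y\<in>{cB..cA}. \<Theta> c0 \<le> \<Theta> y"
    using continuous_attains_inf[of "{cB..cA}" \<Theta>] cBA by auto
  have minall: "\<forall>c'\<ge>0. \<Theta> c0 \<le> \<Theta> c'"
  proof (intro allI impI)
    fix c' :: real assume c': "0 \<le> c'"
    show "\<Theta> c0 \<le> \<Theta> c'"
    proof (cases "c' \<le> cB")
      case True
      then have "\<Theta> c' = \<Theta> cB" using part2 c' cB0 by simp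
      then show ?thesis using c0 cBA by auto
    next
      case False
      show ?thesis
      proof (cases "cA \<le> c'")
        case True
        then have "\<Theta> c' = c' * persD A" "\<Theta> cA = cA * persD A" using part3 by auto
        moreover have "cA * persD A \<le> c' * persD A" using True pA by (simp add: mult_right_mono)
        moreover have "\<Theta> c0 \<le> \<Theta> cA" using c0 cBA by auto
        ultimately show ?thesis by simp
      next
        case False
        then show ?thesis using c0 \<open>\<not> c' \<le> cB\<close> by auto
      qed
    qed
  qed
  have "dbar A B = \<Theta> c0"
    unfolding dbar_def
  proof (rule cInf_eq_minimum)
    have "0 \<le> c0" using c0 cB0 by simp
    then show "\<Theta> c0 \<in> {bottleneck (scale_diag c A) B |c. 0 \<le> c}"
      unfolding assms(5) by blast
    fix y assume "y \<in> {bottleneck (scale_diag c A) B |c. 0 \<le> c}"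
    then obtain c where "y = \<Theta> c" "0 \<le> c" unfolding assms(5) by blast
    then show "\<Theta> c0 \<le> y" using minall by simp
  qed
  then show ?thesis using cBA part2 part3 c0 minall by auto
qed

end
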